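(* For the scaled single-server CDN described in the context, $$\lim_{c\to\infty}\frac1c J_1^c=\lim_{c\to\infty}\frac1c J_{ub}^c,$$ where $J_1^c$ is the throughput of the scaled system and $J_{ub}^c=\min\big(\lambda^c(0),\mu^c\big)$.
   Context: A single surrogate server in a planar network region $G$ of area $\mathcal{A}$ serves requests first-come-first-served with exponential service rate $\mu^c=c\mu$, where $c\ge1$ is a scaling factor. Requests arrive as a Poisson process of rate $\lambda^c=c\lambda$ with locations uniform on $G$; the disc of radius $\psi$ around the server lies in $G$; $\mathcal{A}$ and the latency bound $\psi>0$ do not depend on $c$. A request arriving when the server holds $n$ requests is routed to it iff its location is within distance $\psi-(n+1)/\mu^c$ of the server. Thus the number of requests is a birth–death chain on $\{0,\dots,N^c\}$, $N^c=\lceil\psi c\mu-1\rceil$, with death rate $\mu^c$ and birth rate $\lambda^c(n)=\frac{c\lambda}{\mathcal{A}}\pi\big(\psi-\frac{n+1}{c\mu}\big)^2$ for $n<N^c$ ($0$ at $N^c$). The throughput $J_1^c$ is the long-run rate of served requests. *)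

theory Defs
  imports Complex_Main
begin

text \<open>Scaled single-server CDN. Parameters: arrival rate lam, service rate mu,
 area A of the region G, latency bound psi, scaling factor c.\<close>

definition cap :: "real \<Rightarrow> real \<Rightarrow> real \<Rightarrow> nat" where
  "cap psi mu c = nat \<lceil>psi * c * mu - 1\<rceil>"

definition birth :: "real \<Rightarrow> real \<Rightarrow> real \<Rightarrow> real \<Rightarrow> real \<Rightarrow> nat \<Rightarrow> real" where
  "birth lam mu A psi c n =
     (if n < cap psi mu c
      then (c * lam / A) * pi * (psi - (real n + 1) / (c * mu))^2 else 0)"

text \<open>Unnormalised stationary weights of the birth-death chain on {0..N}.\<close>
definition weight :: "real \<Rightarrow> real \<Rightarrow> real \<Rightarrow> real \<Rightarrow> real \<Rightarrow> nat \<Rightarrow> real" where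
  "weight lam mu A psi c n = (\<Prod>k<n. birth lam mu A psi c k / (c * mu))"

definition stat_dist :: "real \<Rightarrow> real \<Rightarrow> real \<Rightarrow> real \<Rightarrow> real \<Rightarrow> nat \<Rightarrow> real" where
  "stat_dist lam mu A psi c n =
     weight lam mu A psi c n / (\<Sum>m\<le>cap psi mu c. weight lam mu A psi c m)"

text \<open>Throughput: long-run rate of served requests = mu^c * P(server busy).\<close>
definition throughput :: "real \<Rightarrow> real \<Rightarrow> real \<Rightarrow> real \<Rightarrow> real \<Rightarrow> real" where
  "throughput lam mu A psi c = (c * mu) * (1 - stat_dist lam mu A psi c 0)"

definition throughput_ub :: "real \<Rightarrow> real \<Rightarrow> real \<Rightarrow> real \<Rightarrow> real \<Rightarrow> real" where
  "throughput_ub lam mu A psi c = min (birth lam mu A psi c 0) (c * mu)"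

end

theory Submission imports Defs begin

context
  fixes lam mu A psi :: real
  assumes lam: "lam > 0" and mu: "mu > 0" and A: "A > 0" and psi: "psi > 0"
begin

lemma weight_Suc: "weight lam mu A psi c (Suc n) = weight lam mu A psi c n * (birth lam mu A psi c n / (c*mu))"
  by (simp add: weight_def)

lemma weight0: "weight lam mu A psi c 0 = 1" by (simp add: weight_def)

lemma birth_nonneg: "c > 0 \<Longrightarrow> birth lam mu A psi c n \<ge> 0"
  using lam A by (simp add: birth_def)

lemma weight_nonneg: "c > 0 \<Longrightarrow> weight lam mu A psi c n \<ge> 0"
  unfolding weight_def using birth_nonneg mu by (intro prod_nonneg) auto

lemma S_ge1: "c > 0 \<Longrightarrow> (\<Sum>m\<le>cap psi mu c. weight lam mu A psi c m) \<ge> 1"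
proof -
  assume c: "c > 0"
  have "weight lam mu A psi c 0 \<le> (\<Sum>m\<le>cap psi mu c. weight lam mu A psi c m)"
    by (rule member_le_sum) (auto intro: weight_nonneg c)
  then show ?thesis by (simp add: weight0)
qed

lemma thr_eq: "c > 0 \<Longrightarrow> throughput lam mu A psi c / c = mu * (1 - 1 / (\<Sum>m\<le>cap psi mu c. weight lam mu A psi c m))"
  by (simp add: throughput_def stat_dist_def weight0)

lemma in_range: "c > 0 \<Longrightarrow> m < cap psi mu c \<Longrightarrow> real m + 1 < psi * c * mu"
proof -
  assume c: "c > 0" and m: "m < cap psi mu c"
  have "real m + 1 \<le> real (cap psi mu c)" using m by linarith
  also have "\<dots> < psi * c * mu"
  proof -
    have x: "0 < psi*c*mu" using psi mu c by simp
    have h: "real_of_int \<lceil>psi*c*mu - 1\<rceil> < psi*c*mu"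
      using ceiling_correct[of "psi*c*mu - 1"] by linarith
    show ?thesis unfolding cap_def using x h by (cases "\<lceil>psi*c*mu - 1\<rceil> \<ge> 0") auto
  qed
  finally show ?thesis .
qed

lemma birth_le0: assumes c: "c > 0" and m: "m < cap psi mu c"
  shows "birth lam mu A psi c m \<le> birth lam mu A psi c 0"
proof -
  have m0: "0 < cap psi mu c" using m by simp
  have r: "real m + 1 < psi * c * mu" using in_range[OF c m] .
  have cm: "c*mu > 0" using c mu by simp
  have a: "0 \<le> psi - (real m + 1) / (c*mu)" using r cm by (simp add: field_simps)
  have b: "psi - (real m + 1) / (c*mu) \<le> psi - 1/(c*mu)" using cm
    by (simp add: divide_right_mono)
  have "(psi - (real m + 1) / (c*mu))^2 \<le> (psi - 1/(c*mu))^2"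
    by (rule power_mono[OF b a])
  then show ?thesis using m m0 lam A c unfolding birth_def
    by simp (intro divide_right_mono mult_left_mono; use lam A c in auto)
qed

lemma upper: assumes c: "c > 0"
  shows "throughput lam mu A psi c / c \<le> throughput_ub lam mu A psi c / c"
proof -
  let ?w = "weight lam mu A psi c" and ?N = "cap psi mu c" and ?b = "birth lam mu A psi c"
  define S where "S = (\<Sum>m\<le>?N. ?w m)"
  have S1: "S \<ge> 1" using S_ge1[OF c] S_def by simp
  have cm: "c*mu > 0" using c mu by simp
  have "S = ?w 0 + (\<Sum>m<?N. ?w (Suc m))" unfolding S_def by (rule sum.atMost_shift)
  hence "S - 1 = (\<Sum>m<?N. ?w m * (?b m / (c*mu)))" by (simp add: weight0 weight_Suc)
  also have "\<dots> \<le> (\<Sum>m<?N. ?w m * (?b 0 / (c*mu)))"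
    by (intro sum_mono mult_left_mono divide_right_mono birth_le0 weight_nonneg c) (use cm in auto)
  also have "\<dots> = (\<Sum>m<?N. ?w m) * (?b 0 / (c*mu))" by (rule sum_distrib_right[symmetric])
  also have "\<dots> \<le> S * (?b 0 / (c*mu))" unfolding S_def
    by (intro mult_right_mono sum_mono2 divide_nonneg_pos birth_nonneg c cm weight_nonneg) auto
  finally have h: "S - 1 \<le> S * (?b 0 / (c*mu))" .
  have "mu * (1 - 1/S) = mu * (S - 1) / S" using S1 by (simp add: field_simps)
  also have "\<dots> \<le> mu * (S * (?b 0 / (c*mu))) / S"
    using h S1 mu by (intro divide_right_mono mult_left_mono) auto
  also have "\<dots> = ?b 0 / c" using S1 mu c by (simp add: field_simps)
  finally have u1: "mu * (1 - 1/S) \<le> ?b 0 / c" .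
  have u2: "mu * (1 - 1/S) \<le> mu" using S1 mu by simp
  have "min (?b 0) (c*mu) / c = min (?b 0 / c) mu" using c
    using c mu by (cases "?b 0 \<le> c*mu") (auto simp: min_def field_simps)
  then show ?thesis using u1 u2 thr_eq[OF c] S_def unfolding throughput_ub_def by simp
qed


lemma lower:
  fixes eta c :: real
  assumes c: "c > 0" and e0: "0 < eta" and e1: "eta < 1" and ep: "eta < psi"
    and big: "c * mu * (psi - eta) \<ge> 1"
  defines "q \<equiv> min (lam * pi / A * (psi - eta)^2 / mu) (1 - eta)"
  defines "M \<equiv> nat \<lfloor>c * mu * eta\<rfloor>"
  shows "throughput lam mu A psi c / c \<ge> mu * (1 - (1 - q) / (1 - q ^ Suc M))"
proof -
  let ?w = "weight lam mu A psi c" and ?N = "cap psi mu c" and ?b = "birth lam mu A psi c"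
  define S where "S = (\<Sum>m\<le>?N. ?w m)"
  have S1: "S \<ge> 1" using S_ge1[OF c] S_def by simp
  have cm: "c*mu > 0" using c mu by simp
  have q0: "q \<ge> 0" unfolding q_def using lam A mu e1 by auto
  have q1: "q < 1" unfolding q_def using e0 by auto
  have Mle: "real M \<le> c * mu * eta" unfolding M_def using e0 cm by simp
  have MN: "M \<le> ?N"
  proof -
    have "real M \<le> psi * c * mu - 1" using Mle big by (simp add: algebra_simps)
    also have "\<dots> \<le> real ?N" unfolding cap_def by linarith
    finally show ?thesis by simp
  qed
  have qb: "q \<le> ?b k / (c*mu)" if k: "k < M" for k
  proof -
    have kN: "k < ?N" using k MN by simp
    have "real k + 1 \<le> c * mu * eta" using k Mle by linarith
    hence t: "(real k + 1) / (c*mu) \<le> eta" using cm by (simp add: field_simps)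
    have a: "0 \<le> psi - eta" using ep by simp
    have "(psi - eta)^2 \<le> (psi - (real k + 1) / (c*mu))^2"
      by (rule power_mono) (use t a in auto)
    hence "lam * pi / A * (psi - eta)^2 / mu \<le> lam * pi / A * (psi - (real k + 1) / (c*mu))^2 / mu"
      using lam A mu by (intro divide_right_mono mult_left_mono) auto
    also have "\<dots> = ?b k / (c*mu)" unfolding birth_def using kN c mu by (simp add: field_simps)
    finally show ?thesis unfolding q_def by linarith
  qed
  have qw: "q ^ m \<le> ?w m" if m: "m \<le> M" for m
  proof -
    have "q ^ m = (\<Prod>k<m. q)" by simp
    also have "\<dots> \<le> (\<Prod>k<m. ?b k / (c*mu))"
      by (intro prod_mono) (use qb m q0 in auto)
    finally show ?thesis by (simp add: weight_def)
  qed
  have G: "(\<Sum>m\<le>M. q ^ m) = (1 - q ^ Suc M) / (1 - q)"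
    using sum_gp_strict[of q "Suc M"] q1 by (simp add: lessThan_Suc_atMost)
  have "(\<Sum>m\<le>M. q ^ m) \<le> (\<Sum>m\<le>M. ?w m)" by (intro sum_mono qw) auto
  also have "\<dots> \<le> S" unfolding S_def using MN
    by (intro sum_mono2 weight_nonneg c) auto
  finally have GS: "(1 - q ^ Suc M) / (1 - q) \<le> S" using G by simp
  have qp: "q ^ Suc M < 1" using q0 q1 by (metis power_strict_mono power_one zero_less_Suc)
  have Gpos: "0 < (1 - q ^ Suc M) / (1 - q)" using qp q1 by simp
  have "1 / S \<le> 1 / ((1 - q ^ Suc M) / (1 - q))"
    using Gpos S1 by (intro divide_left_mono[OF GS] mult_pos_pos) auto
  also have "\<dots> = (1 - q) / (1 - q ^ Suc M)" by simp
  finally have "1/S \<le> (1 - q) / (1 - q ^ Suc M)" .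
  then show ?thesis using thr_eq[OF c] S_def mu by (simp add: mult_left_mono)
qed

end

theorem lemma7:
  fixes lam mu A psi :: real
  assumes "lam > 0" and "mu > 0" and "A > 0" and "psi > 0"
    and "pi * psi^2 \<le> A"
  shows "\<exists>L. ((\<lambda>c. throughput lam mu A psi c / c) \<longlongrightarrow> L) at_top
           \<and> ((\<lambda>c. throughput_ub lam mu A psi c / c) \<longlongrightarrow> L) at_top"
proof -
  note lam = assms(1) and mu = assms(2) and A = assms(3) and psi = assms(4)
  define \<beta> where "\<beta> = lam * pi / A"
  have b0: "\<beta> > 0" unfolding \<beta>_def using lam A by simp
  define L where "L = min (\<beta> * psi^2) mu"
  have ev1: "eventually (\<lambda>c. throughput_ub lam mu A psi c / c = min (\<beta> * (psi - 1/(c*mu))^2) mu) at_top"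
    using eventually_gt_at_top[of "max 0 (1/(psi*mu))"]
  proof eventually_elim
    case (elim c)
    have c: "c > 0" using elim by simp
    have "1 < psi * c * mu" using elim psi mu by (simp add: field_simps)
    hence cap: "0 < cap psi mu c" unfolding cap_def by simp
    have "min (birth lam mu A psi c 0) (c*mu) / c = min (birth lam mu A psi c 0 / c) mu"
      using c mu by (cases "birth lam mu A psi c 0 \<le> c*mu") (auto simp: min_def field_simps)
    also have "birth lam mu A psi c 0 / c = \<beta> * (psi - 1/(c*mu))^2"
      unfolding birth_def \<beta>_def using cap c by simp
    finally show ?case unfolding throughput_ub_def .
  qed
  have "((\<lambda>c. inverse mu * inverse c) \<longlongrightarrow> inverse mu * 0) at_top"
    by (intro tendsto_intros tendsto_inverse_0_at_top filterlim_ident)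
  hence lim0: "((\<lambda>c. 1/(c*mu)) \<longlongrightarrow> 0) at_top" by (simp add: mult.commute divide_inverse)
  have "((\<lambda>c. min (\<beta> * (psi - 1/(c*mu))^2) mu) \<longlongrightarrow> min (\<beta> * (psi - 0)^2) mu) at_top"
    by (intro tendsto_intros lim0)
  hence ublim: "((\<lambda>c. throughput_ub lam mu A psi c / c) \<longlongrightarrow> L) at_top"
    unfolding L_def using tendsto_cong[OF ev1] by simp
  have "((\<lambda>c. throughput lam mu A psi c / c) \<longlongrightarrow> L) at_top"
  proof (rule order_tendstoI)
    fix y assume "L < y"
    from order_tendstoD(2)[OF ublim this] eventually_gt_at_top[of 0]
    show "eventually (\<lambda>c. throughput lam mu A psi c / c < y) at_top"
    proof eventually_elim
      case (elim c)
      then show ?case using upper[OF lam mu A psi, of c] by simp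
    qed
  next
    fix y assume yL: "y < L"
    define d where "d = L - y"
    have d0: "d > 0" using yL d_def by simp
    define eta where "eta = min (psi/2) (min (1/2) (d / (2 * (2*\<beta>*psi + mu))))"
    have pos: "2*\<beta>*psi + mu > 0" using b0 psi mu by (simp add: add_pos_pos)
    have dp: "0 < d / (2 * (2*\<beta>*psi + mu))" using d0 pos by simp
    have e0: "eta > 0" unfolding eta_def using psi dp by simp
    have e1: "eta < 1" unfolding eta_def by simp
    have ep: "eta < psi" unfolding eta_def using psi by simp
    have ed: "(2*\<beta>*psi + mu) * eta \<le> d/2"
    proof -
      have "eta \<le> d / (2 * (2*\<beta>*psi + mu))" unfolding eta_def by simp
      hence "(2*\<beta>*psi + mu) * eta \<le> (2*\<beta>*psi + mu) * (d / (2 * (2*\<beta>*psi + mu)))"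
        using pos by (intro mult_left_mono) auto
      also have "\<dots> = d/2" using pos by (simp add: field_simps)
      finally show ?thesis .
    qed
    define q where "q = min (lam * pi / A * (psi - eta)^2 / mu) (1 - eta)"
    have q0: "q \<ge> 0" unfolding q_def using lam A mu e1 by auto
    have q1: "q < 1" unfolding q_def using e0 by auto
    have muq: "mu * q > y"
    proof -
      have "\<beta> * (psi - eta)^2 \<ge> \<beta> * psi^2 - 2*\<beta>*psi*eta"
        using b0 by (simp add: power2_eq_square algebra_simps)
      moreover have "2*\<beta>*psi*eta \<le> d/2" "mu * eta \<le> d/2"
      proof -
        have eq: "(2*\<beta>*psi+mu)*eta = 2*\<beta>*psi*eta + mu*eta" by (simp add: algebra_simps)
        have "mu*eta \<ge> 0" "2*\<beta>*psi*eta \<ge> 0" using e0 b0 psi mu by simp_all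
        then show "2*\<beta>*psi*eta \<le> d/2" "mu * eta \<le> d/2" using eq ed by linarith+
      qed
      moreover have "L \<le> \<beta> * psi^2" "L \<le> mu" unfolding L_def by auto
      ultimately have "\<beta> * (psi - eta)^2 > y" "mu * (1 - eta) > y"
        using d_def d0 by (simp_all add: algebra_simps)
      moreover have "mu * q = min (\<beta> * (psi - eta)^2) (mu * (1 - eta))"
        unfolding q_def \<beta>_def using mu by (subst min_mult_distrib_left) auto
      ultimately show ?thesis by simp
    qed
    define g where "g = (\<lambda>n. mu * (1 - (1 - q) / (1 - q ^ Suc n)))"
    have "g \<longlonglongrightarrow> mu * (1 - (1 - q) / (1 - 0))"
      unfolding g_def using q0 q1
      by (intro tendsto_intros LIMSEQ_power_zero[THEN LIMSEQ_Suc]) auto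
    hence glim: "g \<longlonglongrightarrow> mu * q" by simp
    define M where "M = (\<lambda>c::real. nat \<lfloor>c * mu * eta\<rfloor>)"
    have Mlim: "filterlim M at_top at_top"
      unfolding filterlim_at_top
    proof
      fix Z :: nat
      show "eventually (\<lambda>c. Z \<le> M c) at_top"
        using eventually_ge_at_top[of "real Z / (mu * eta)"]
      proof eventually_elim
        case (elim c)
        hence "real Z \<le> c * mu * eta" using mu e0 by (simp add: field_simps)
        then show ?case unfolding M_def by (rule le_nat_floor)
      qed
    qed
    have evg: "eventually (\<lambda>c. y < g (M c)) at_top"
      using order_tendstoD(1)[OF filterlim_compose[OF glim Mlim] muq] by simp
    from evg eventually_ge_at_top[of "max 1 (1 / (mu * (psi - eta)))"]
    show "eventually (\<lambda>c. y < throughput lam mu A psi c / c) at_top"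
    proof eventually_elim
      case (elim c)
      have c: "c > 0" using elim by simp
      have "1 / (mu * (psi - eta)) \<le> c" using elim by simp
      hence big: "c * mu * (psi - eta) \<ge> 1" using mu ep by (simp add: field_simps)
      have "g (M c) \<le> throughput lam mu A psi c / c"
        using lower[OF lam mu A psi c e0 e1 ep big] unfolding g_def M_def q_def by simp
      then show ?case using elim by simp
    qed
  qed
  with ublim show ?thesis by blast
qed

end
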